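(* Let $K_i(v)=K_{0i}e^{-v^2/(2\sigma_{K_i}^2)}$ ($i=1,2$) and $a(v_1,v_2)=a_0e^{-(v_1-v_2)^2/(2\sigma_a^2)}$ with all constants positive, and consider $$\begin{aligned}\dot x_1&=x_1\Big[r_1\Big(1-\frac{x_1}{K_1(u_1)}\Big)-\frac{a(u_1,u_2)x_2}{1+ha(u_1,u_2)x_1}\Big],\\ \dot x_2&=x_2\Big[\frac{ea(u_1,u_2)x_1}{1+ha(u_1,u_2)x_1}-d+r_2\Big(1-\frac{x_2}{K_2(u_2)}\Big)\Big],\\ \dot u_1&=\sigma_1^2\Big[-\frac{r_1x_1u_1}{\sigma_{K_1}^2K_1(u_1)}+\frac{(u_1-u_2)x_2a(u_1,u_2)}{\sigma_a^2(1+ha(u_1,u_2)x_1)^2}\Big],\\ \dot u_2&=\sigma_2^2\Big[-\frac{r_2x_2u_2}{\sigma_{K_2}^2K_2(u_2)}+\frac{e(u_1-u_2)x_1a(u_1,u_2)}{\sigma_a^2(1+ha(u_1,u_2)x_1)^2}\Big],\end{aligned}$$ with $r_1,r_2,h,e,\sigma_1,\sigma_2>0$, $d\ge0$. (i) If $r_2+\frac{ea_0K_{01}}{1+a_0hK_{01}}<d$, then the strategy $(0,0)$ of the boundary equilibrium $(K_{01},0,0,0)$ is the unique ESS of the system. (ii) Assume $\sigma_{K_2}>\sigma_{K_1}$, and let $(x_1^*,x_2^*,0,0)$ with $x_1^*,x_2^*>0$ be an equilibrium of the system. If $K_{02}a_0<\frac{r_1}{1-\frac{d}{r_2}}$, $K_{01}a_0<\frac{1}{h}$,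 $\min\{\frac{2r_2}{K_{02}},\frac{r_1}{\sigma_{K_1}^2K_{01}}\}>a_0$, $\frac{r_1r_2}{K_{01}K_{02}}+\frac{ea_0^2}{(1+a_0hK_{01})^3}>a_0^2hK_{02}(r_2+\frac{e}{h})$, $\frac{\sigma_{K_2}}{\sigma_{K_1}}\sqrt{\frac{r_1eK_{02}}{r_2K_{01}}}>\frac{x_2^*}{x_1^*}$ and $\frac{\sigma_a^2}{\sigma_{K_1}\sigma_{K_2}}>\sqrt{\frac{eK_{01}K_{02}}{r_1r_2}}\,a_0$, then the strategy $(0,0)$ of $(x_1^*,x_2^*,0,0)$ is the unique ESS of the system.
   Context: Fitness functions: $G_1(v_1,u,x)=r_1(1-\frac{x_1}{K_1(v_1)})-\frac{a(v_1,u_2)x_2}{1+ha(v_1,u_2)x_1}$ and $G_2(v_2,u,x)=\frac{ea(u_1,v_2)x_1}{1+ha(u_1,v_2)x_1}-d+r_2(1-\frac{x_2}{K_2(v_2)})$. For an equilibrium $(x^*,u^* )$ of the system, $u^*$ is an evolutionary stable strategy (ESS) if $(x^*,u^* )$ is locally asymptotically stable for the four-dimensional system and, for $i=1,2$, $\max_{v_i\in\mathbb R}G_i(v_i,u^*,x^* )=G_i(u_i^*,u^*,x^* )=0$ when $x_1^*,x_2^*>0$, respectively $\max_{v_i\in\mathbb R}G_i(v_i,u^*,x^* )=G_i(u_i^*,u^*,x^* )\le0$ when $x_1^*x_2^*=0$. "Unique ESS" means that it is an ESS and no other equilibrium of the system has an ESS strategy. *)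

theory Defs
  imports "HOL-Analysis.Analysis"
begin

record params =
  pK01 :: real
  pK02 :: real
  psK1 :: real
  psK2 :: real
  pa0  :: real
  psa  :: real
  pr1  :: real
  pr2  :: real
  ph   :: real
  pe   :: real
  pd   :: real
  ps1  :: real
  ps2  :: real

definition K1 :: "params \<Rightarrow> real \<Rightarrow> real" where
  "K1 P v = pK01 P * exp (- (v\<^sup>2) / (2 * (psK1 P)\<^sup>2))"

definition K2 :: "params \<Rightarrow> real \<Rightarrow> real" where
  "K2 P v = pK02 P * exp (- (v\<^sup>2) / (2 * (psK2 P)\<^sup>2))"

definition acoef :: "params \<Rightarrow> real \<Rightarrow> real \<Rightarrow> real" where
  "acoef P v1 v2 = pa0 P * exp (- ((v1 - v2)\<^sup>2) / (2 * (psa P)\<^sup>2))"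

definition G1 :: "params \<Rightarrow> real \<Rightarrow> real \<Rightarrow> real \<Rightarrow> real \<Rightarrow> real \<Rightarrow> real" where
  "G1 P v1 u1 u2 x1 x2 =
     pr1 P * (1 - x1 / K1 P v1) - acoef P v1 u2 * x2 / (1 + ph P * acoef P v1 u2 * x1)"

definition G2 :: "params \<Rightarrow> real \<Rightarrow> real \<Rightarrow> real \<Rightarrow> real \<Rightarrow> real \<Rightarrow> real" where
  "G2 P v2 u1 u2 x1 x2 =
     pe P * acoef P u1 v2 * x1 / (1 + ph P * acoef P u1 v2 * x1) - pd P
     + pr2 P * (1 - x2 / K2 P v2)"

definition field :: "params \<Rightarrow> real \<times> real \<times> real \<times> real \<Rightarrow> real \<times> real \<times> real \<times> real" where
  "field P s = (case s of (x1, x2, u1, u2) \<Rightarrow>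
     let a = acoef P u1 u2 in
     ( x1 * (pr1 P * (1 - x1 / K1 P u1) - a * x2 / (1 + ph P * a * x1)),
       x2 * (pe P * a * x1 / (1 + ph P * a * x1) - pd P + pr2 P * (1 - x2 / K2 P u2)),
       (ps1 P)\<^sup>2 * (- (pr1 P * x1 * u1) / ((psK1 P)\<^sup>2 * K1 P u1)
                     + (u1 - u2) * x2 * a / ((psa P)\<^sup>2 * (1 + ph P * a * x1)\<^sup>2)),
       (ps2 P)\<^sup>2 * (- (pr2 P * x2 * u2) / ((psK2 P)\<^sup>2 * K2 P u2)
                     + pe P * (u1 - u2) * x1 * a / ((psa P)\<^sup>2 * (1 + ph P * a * x1)\<^sup>2))))"

definition is_equilibrium :: "params \<Rightarrow> real \<times> real \<times> real \<times> real \<Rightarrow> bool" where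
  "is_equilibrium P p \<longleftrightarrow> field P p = 0"

definition solution_on :: "params \<Rightarrow> real \<Rightarrow> (real \<Rightarrow> real \<times> real \<times> real \<times> real) \<Rightarrow> bool" where
  "solution_on P T y \<longleftrightarrow>
     (\<forall>t\<in>{0..T}. (y has_vector_derivative field P (y t)) (at t within {0..T}))"

definition global_solution :: "params \<Rightarrow> (real \<Rightarrow> real \<times> real \<times> real \<times> real) \<Rightarrow> bool" where
  "global_solution P y \<longleftrightarrow>
     (\<forall>t\<ge>0. (y has_vector_derivative field P (y t)) (at t within {0..}))"

definition loc_asym_stable :: "params \<Rightarrow> real \<times> real \<times> real \<times> real \<Rightarrow> bool" where
  "loc_asym_stable P p \<longleftrightarrow>
     (\<forall>\<epsilon>>0. \<exists>\<delta>>0. \<forall>T y. T \<ge> 0 \<and> solution_on P T y \<and> dist (y 0) p < \<delta> \<longrightarrow>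
         (\<forall>t\<in>{0..T}. dist (y t) p < \<epsilon>)) \<and>
     (\<exists>\<delta>>0. \<forall>y. global_solution P y \<and> dist (y 0) p < \<delta> \<longrightarrow> (y \<longlongrightarrow> p) at_top)"

definition ESS :: "params \<Rightarrow> real \<Rightarrow> real \<Rightarrow> real \<Rightarrow> real \<Rightarrow> bool" where
  "ESS P x1 x2 u1 u2 \<longleftrightarrow>
     is_equilibrium P (x1, x2, u1, u2) \<and> loc_asym_stable P (x1, x2, u1, u2) \<and>
     x1 \<ge> 0 \<and> x2 \<ge> 0 \<and>
     (\<forall>v. G1 P v u1 u2 x1 x2 \<le> G1 P u1 u1 u2 x1 x2) \<and>
     (\<forall>v. G2 P v u1 u2 x1 x2 \<le> G2 P u2 u1 u2 x1 x2) \<and>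
     (if x1 > 0 \<and> x2 > 0
      then G1 P u1 u1 u2 x1 x2 = 0 \<and> G2 P u2 u1 u2 x1 x2 = 0
      else G1 P u1 u1 u2 x1 x2 \<le> 0 \<and> G2 P u2 u1 u2 x1 x2 \<le> 0)"

definition unique_ESS :: "params \<Rightarrow> real \<Rightarrow> real \<Rightarrow> real \<Rightarrow> real \<Rightarrow> bool" where
  "unique_ESS P x1 x2 u1 u2 \<longleftrightarrow>
     ESS P x1 x2 u1 u2 \<and>
     (\<forall>y1 y2 w1 w2. ESS P y1 y2 w1 w2 \<longrightarrow> (y1, y2, w1, w2) = (x1, x2, u1, u2))"

end

theory Submission
  imports Defs "HOL-Real_Asymp.Real_Asymp"
begin


type_synonym st = "real \<times> real \<times> real \<times> real"

definition Bw :: "st \<Rightarrow> st \<Rightarrow> st \<Rightarrow> real" where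
  "Bw q z w = fst q * fst z * fst w + fst (snd q) * fst (snd z) * fst (snd w)
     + fst (snd (snd q)) * fst (snd (snd z)) * fst (snd (snd w))
     + snd (snd (snd q)) * snd (snd (snd z)) * snd (snd (snd w))"

lemma norm_st_sq: "(norm (z::st))\<^sup>2 = (fst z)\<^sup>2 + (fst (snd z))\<^sup>2 + (fst (snd (snd z)))\<^sup>2 + (snd (snd (snd z)))\<^sup>2"
  by (cases z) (simp add: norm_Pair)

lemma comp_le_norm:
  fixes z :: st
  shows "\<bar>fst z\<bar> \<le> norm z" "\<bar>fst (snd z)\<bar> \<le> norm z" "\<bar>fst (snd (snd z))\<bar> \<le> norm z" "\<bar>snd (snd (snd z))\<bar> \<le> norm z"
proof -
  have h: "\<And>c. c\<^sup>2 \<le> (norm z)\<^sup>2 \<Longrightarrow> \<bar>c\<bar> \<le> norm z"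
    by (metis abs_le_square_iff abs_norm_cancel)
  show "\<bar>fst z\<bar> \<le> norm z" "\<bar>fst (snd z)\<bar> \<le> norm z" "\<bar>fst (snd (snd z))\<bar> \<le> norm z" "\<bar>snd (snd (snd z))\<bar> \<le> norm z"
    by (rule h, simp add: norm_st_sq)+
qed

lemma Bw_bound:
  fixes q z w :: st
  assumes "fst q \<ge> 0" "fst (snd q) \<ge> 0" "fst (snd (snd q)) \<ge> 0" "snd (snd (snd q)) \<ge> 0"
  shows "\<bar>Bw q z w\<bar> \<le> (fst q + fst (snd q) + fst (snd (snd q)) + snd (snd (snd q))) * norm z * norm w"
proof -
  have t: "\<And>a b c::real. a \<ge> 0 \<Longrightarrow> \<bar>b\<bar> \<le> norm z \<Longrightarrow> \<bar>c\<bar> \<le> norm w \<Longrightarrow> \<bar>a*b*c\<bar> \<le> a * norm z * norm w"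
    by (simp add: abs_mult mult_mono mult_left_mono)
  show ?thesis unfolding Bw_def
    using t[OF assms(1) comp_le_norm(1)[of z] comp_le_norm(1)[of w]]
      t[OF assms(2) comp_le_norm(2)[of z] comp_le_norm(2)[of w]]
      t[OF assms(3) comp_le_norm(3)[of z] comp_le_norm(3)[of w]]
      t[OF assms(4) comp_le_norm(4)[of z] comp_le_norm(4)[of w]]
    by (simp add: algebra_simps)
qed

lemma Bw_lower:
  fixes q z :: st
  assumes "fst q \<ge> m" "fst (snd q) \<ge> m" "fst (snd (snd q)) \<ge> m" "snd (snd (snd q)) \<ge> m"
  shows "Bw q z z \<ge> m * (norm z)\<^sup>2"
proof -
  have "\<And>a b. a \<ge> m \<Longrightarrow> a * b * b \<ge> m * b\<^sup>2"
    by (simp add: mult_right_mono power2_eq_square mult.assoc)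
  then show ?thesis unfolding Bw_def norm_st_sq using assms
    by (smt (verit) distrib_left)
qed

lemma Bw_upper:
  fixes q z :: st
  assumes "fst q \<le> M" "fst (snd q) \<le> M" "fst (snd (snd q)) \<le> M" "snd (snd (snd q)) \<le> M"
  shows "Bw q z z \<le> M * (norm z)\<^sup>2"
proof -
  have "\<And>a b. a \<le> M \<Longrightarrow> a * b * b \<le> M * b\<^sup>2"
    by (simp add: mult_right_mono power2_eq_square mult.assoc)
  then show ?thesis unfolding Bw_def norm_st_sq using assms
    by (smt (verit) distrib_left)
qed

lemma Bw_deriv:
  "((\<lambda>z. Bw q z z) has_derivative (\<lambda>h. 2 * Bw q z h)) (at z within S)"
  unfolding Bw_def
  by (auto intro!: derivative_eq_intros simp: algebra_simps)

lemma phi_deriv: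
  assumes "(y has_vector_derivative v) (at t within S)"
  shows "((\<lambda>t. Bw q (y t - p) (y t - p)) has_real_derivative (2 * Bw q (y t - p) v)) (at t within S)"
proof -
  have y': "((\<lambda>t. y t - p) has_derivative (\<lambda>x. x *\<^sub>R v)) (at t within S)"
    using assms by (auto simp: has_vector_derivative_def intro!: derivative_eq_intros)
  have "((\<lambda>z. Bw q z z) \<circ> (\<lambda>t. y t - p) has_derivative (\<lambda>h. 2 * Bw q (y t - p) h) \<circ> (\<lambda>x. x *\<^sub>R v)) (at t within S)"
    by (rule diff_chain_within[OF y' Bw_deriv])
  moreover have "(\<lambda>h. 2 * Bw q (y t - p) h) \<circ> (\<lambda>x. x *\<^sub>R v) = (\<lambda>x. x * (2 * Bw q (y t - p) v))"
    by (auto simp: Bw_def algebra_simps)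
  ultimately have "((\<lambda>x. Bw q (y x - p) (y x - p)) has_derivative (\<lambda>x. x * (2 * Bw q (y t - p) v))) (at t within S)"
    by (simp add: o_def)
  moreover have "(\<lambda>x. x * (2 * Bw q (y t - p) v)) = (*) (2 * Bw q (y t - p) v)"
    by (auto simp: mult.commute)
  ultimately show ?thesis
    by (simp add: has_field_derivative_def)
qed

lemma Bw_add: "Bw q z (a + b) = Bw q z a + Bw q z b"
  by (simp add: Bw_def algebra_simps)

lemma stay:
  fixes p q :: st
  assumes loc: "\<And>x. norm (x - p) < d0 \<Longrightarrow> Bw q (x - p) (field P x) \<le> 0"
    and qm: "qm > 0" "\<And>z. qm * (norm z)\<^sup>2 \<le> Bw q z z"
    and qM: "\<And>z. Bw q z z \<le> qM * (norm z)\<^sup>2"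
    and sol: "solution_on P T y" and T: "T \<ge> 0"
    and r: "0 < r" "r \<le> d0" and init: "qM * (norm (y 0 - p))\<^sup>2 < qm * r\<^sup>2"
  shows "\<forall>t\<in>{0..T}. norm (y t - p) < r"
proof (rule ccontr)
  let ?phi = "\<lambda>t. Bw q (y t - p) (y t - p)"
  assume neg: "\<not> (\<forall>t\<in>{0..T}. norm (y t - p) < r)"
  define S where "S = {0..T} \<inter> (\<lambda>t. norm (y t - p)) -` {r..}"
  have S_ne: "S \<noteq> {}" using neg by (auto simp: S_def not_less)
  have yder: "\<And>t. t \<in> {0..T} \<Longrightarrow> (y has_vector_derivative field P (y t)) (at t within {0..T})"
    using sol by (simp add: solution_on_def)
  have ycont: "continuous_on {0..T} y"
    unfolding continuous_on_eq_continuous_within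
    using yder has_vector_derivative_continuous by blast
  have ncont: "continuous_on {0..T} (\<lambda>t. norm (y t - p))"
    by (intro continuous_intros ycont)
  have S_closed: "closed S" unfolding S_def
    by (rule continuous_closed_preimage[OF ncont]) auto
  have S_bdd: "bdd_below S" unfolding S_def by (rule bdd_belowI[of _ 0]) auto
  define t0 where "t0 = Inf S"
  have t0S: "t0 \<in> S" unfolding t0_def by (rule closed_contains_Inf[OF S_ne S_bdd S_closed])
  have t0_le: "\<And>t. t \<in> S \<Longrightarrow> t0 \<le> t" unfolding t0_def using S_bdd by (simp add: cInf_lower)
  have qmM: "qm * (norm (y 0 - p))\<^sup>2 \<le> qM * (norm (y 0 - p))\<^sup>2"
    using qm(2) qM order_trans by blast
  have y0: "norm (y 0 - p) < r"
  proof -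
    have "qm * (norm (y 0 - p))\<^sup>2 < qm * r\<^sup>2" using qmM init by linarith
    then have "(norm (y 0 - p))\<^sup>2 < r\<^sup>2" using qm(1) by simp
    then show ?thesis using r(1) by (simp add: power_less_imp_less_base)
  qed
  have "0 \<notin> S" using y0 by (auto simp: S_def)
  then have "t0 \<noteq> 0" using t0S by auto
  moreover have "t0 \<ge> 0" using t0S by (simp add: S_def)
  ultimately have t0pos: "t0 > 0" by simp
  have t0T: "t0 \<le> T" using t0S by (auto simp: S_def)
  have before: "\<And>t. 0 \<le> t \<Longrightarrow> t < t0 \<Longrightarrow> norm (y t - p) < r"
  proof -
    fix t assume "0 \<le> t" "t < t0"
    then have "t \<notin> S" using t0_le[of t] by linarith
    with \<open>0 \<le> t\<close> \<open>t < t0\<close> t0T show "norm (y t - p) < r" by (auto simp: S_def)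
  qed
  have phider: "\<And>t. t \<in> {0..T} \<Longrightarrow> (?phi has_real_derivative (2 * Bw q (y t - p) (field P (y t)))) (at t within {0..T})"
    by (rule phi_deriv[OF yder])
  have phicont: "continuous_on {0..t0} ?phi"
    by (rule continuous_on_subset[OF DERIV_continuous_on[OF phider]]) (use t0T in auto)
  have "?phi 0 \<ge> ?phi t0"
  proof (rule DERIV_nonpos_imp_decreasing_open[OF _ _ phicont])
    show "0 \<le> t0" using t0pos by simp
    fix t assume t: "0 < t" "t < t0"
    then have tint: "t \<in> interior {0..T}" using t0T by simp
    have tin: "t \<in> {0..T}" using t t0T by simp
    have "at t within {0..T} = at t" using tint by (rule at_within_interior)
    then have d: "(?phi has_real_derivative (2 * Bw q (y t - p) (field P (y t)))) (at t)"
      using phider[OF tin] by simp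
    have "norm (y t - p) < d0" using before[of t] t r(2) by simp
    then have b: "Bw q (y t - p) (field P (y t)) \<le> 0" by (rule loc)
    show "\<exists>D. (?phi has_real_derivative D) (at t) \<and> D \<le> 0"
    proof (intro exI conjI)
      show "(?phi has_real_derivative (2 * Bw q (y t - p) (field P (y t)))) (at t)" by (rule d)
      show "2 * Bw q (y t - p) (field P (y t)) \<le> 0" using b by simp
    qed
  qed
  moreover have "r \<le> norm (y t0 - p)" using t0S by (auto simp: S_def)
  then have "qm * r\<^sup>2 \<le> qm * (norm (y t0 - p))\<^sup>2"
    using qm(1) r(1) by (simp add: power_mono)
  ultimately have A: "qm * r\<^sup>2 \<le> qm * (norm (y t0 - p))\<^sup>2" and C: "?phi t0 \<le> ?phi 0" by auto
  have B: "qm * (norm (y t0 - p))\<^sup>2 \<le> ?phi t0" by (rule qm(2))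
  have D: "?phi 0 \<le> qM * (norm (y 0 - p))\<^sup>2" by (rule qM)
  have "qm * r\<^sup>2 \<le> qM * (norm (y 0 - p))\<^sup>2"
    using order_trans[OF A order_trans[OF B order_trans[OF C D]]] .
  then show False using init by simp
qed



lemma exp_neg_tendsto: "k > 0 \<Longrightarrow> ((\<lambda>t::real. exp (- k * t)) \<longlongrightarrow> 0) at_top"
  by real_asymp

lemma lyap_LAS:
  fixes p q :: st and J :: "st \<Rightarrow> st"
  assumes eq: "field P p = 0"
    and der: "(field P has_derivative J) (at p)"
    and qpos: "fst q > 0" "fst (snd q) > 0" "fst (snd (snd q)) > 0" "snd (snd (snd q)) > 0"
    and mu: "mu > 0"
    and neg: "\<And>z. Bw q z (J z) \<le> - mu * (norm z)\<^sup>2"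
  shows "loc_asym_stable P p"
proof -
  define qm where "qm = min (min (fst q) (fst (snd q))) (min (fst (snd (snd q))) (snd (snd (snd q))))"
  define qM where "qM = fst q + fst (snd q) + fst (snd (snd q)) + snd (snd (snd q))"
  have qm0: "qm > 0" using qpos by (simp add: qm_def)
  have qM0: "qM > 0" using qpos by (simp add: qM_def)
  have qlow: "\<And>z. qm * (norm z)\<^sup>2 \<le> Bw q z z"
    by (rule Bw_lower) (simp_all add: qm_def)
  have qup: "\<And>z. Bw q z z \<le> qM * (norm z)\<^sup>2"
    by (rule Bw_upper) (use qpos in \<open>simp_all add: qM_def\<close>)
  have qbnd: "\<And>z w. \<bar>Bw q z w\<bar> \<le> qM * norm z * norm w"
    unfolding qM_def by (rule Bw_bound) (use qpos in auto)
  define e where "e = mu / (2 * qM)"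
  have e0: "e > 0" using mu qM0 by (simp add: e_def)
  obtain d0 where d0: "d0 > 0"
    and d0b: "\<And>x. norm (x - p) < d0 \<Longrightarrow> norm (field P x - field P p - J (x - p)) \<le> e * norm (x - p)"
    using der e0 unfolding has_derivative_at_alt by blast
  have loc2: "Bw q (x - p) (field P x) \<le> - (mu / 2) * (norm (x - p))\<^sup>2" if x: "norm (x - p) < d0" for x
  proof -
    define R where "R = field P x - J (x - p)"
    have R: "norm R \<le> e * norm (x - p)" using d0b[OF x] eq by (simp add: R_def)
    have "field P x = J (x - p) + R" by (simp add: R_def)
    then have F: "Bw q (x - p) (field P x) = Bw q (x - p) (J (x - p)) + Bw q (x - p) R"
      by (simp add: Bw_add)
    have "Bw q (x - p) R \<le> qM * norm (x - p) * norm R"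
      using qbnd[of "x - p" R] by simp
    also have "\<dots> \<le> qM * norm (x - p) * (e * norm (x - p))"
      using R qM0 by (simp add: mult_left_mono)
    also have "\<dots> = (mu / 2) * (norm (x - p))\<^sup>2"
      using qM0 by (simp add: e_def power2_eq_square field_simps)
    finally have BR: "Bw q (x - p) R \<le> (mu / 2) * (norm (x - p))\<^sup>2" .
    have BJ: "Bw q (x - p) (J (x - p)) \<le> - mu * (norm (x - p))\<^sup>2" by (rule neg)
    have "Bw q (x - p) (field P x) \<le> - mu * (norm (x - p))\<^sup>2 + (mu / 2) * (norm (x - p))\<^sup>2"
      unfolding F by (rule add_mono[OF BJ BR])
    also have "\<dots> = - (mu / 2) * (norm (x - p))\<^sup>2" by (simp add: field_simps)
    finally show ?thesis .
  qed
  have loc: "\<And>x. norm (x - p) < d0 \<Longrightarrow> Bw q (x - p) (field P x) \<le> 0"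
  proof -
    fix x assume "norm (x - p) < d0"
    show "Bw q (x - p) (field P x) \<le> 0"
    proof -
      have "0 \<le> mu * (norm (x - p))\<^sup>2 / 2" using mu by simp
      then show ?thesis using loc2[OF \<open>norm (x - p) < d0\<close>] by simp
    qed
  qed
  have qmM: "qm \<le> qM" using qlow[of "(1,0,0,0)"] qup[of "(1,0,0,0)"] by (simp add: norm_Pair)
  have dl: "\<exists>\<delta>>0. \<forall>z::st. norm z < \<delta> \<longrightarrow> qM * (norm z)\<^sup>2 < qm * r\<^sup>2" if r: "r > 0" for r
  proof -
    have pos: "r * qm / (2 * qM) > 0" using r qm0 qM0 by simp
    have "qM * (norm z)\<^sup>2 < qm * r\<^sup>2" if z: "norm z < r * qm / (2 * qM)" for z :: st
    proof -
      have "(norm z)\<^sup>2 \<le> (r * qm / (2 * qM))\<^sup>2" using z by (simp add: power_mono)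
      then have "qM * (norm z)\<^sup>2 \<le> qM * (r * qm / (2 * qM))\<^sup>2" using qM0 by simp
      also have "\<dots> = qm * r\<^sup>2 * (qm / (4 * qM))" using qM0 by (simp add: power2_eq_square field_simps)
      also have "\<dots> < qm * r\<^sup>2 * 1" using qm0 qM0 r qmM by (intro mult_strict_left_mono) (simp_all add: field_simps)
      finally show ?thesis by (simp only: mult_1_right)
    qed
    then have H: "\<forall>z::st. norm z < r * qm / (2 * qM) \<longrightarrow> qM * (norm z)\<^sup>2 < qm * r\<^sup>2" by blast
    show ?thesis by (rule exI[of _ "r * qm / (2 * qM)"]) (use pos H in blast)
  qed
  have stab: "\<forall>\<epsilon>>0. \<exists>\<delta>>0. \<forall>T y. T \<ge> 0 \<and> solution_on P T y \<and> dist (y 0) p < \<delta> \<longrightarrow>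
         (\<forall>t\<in>{0..T}. dist (y t) p < \<epsilon>)"
  proof (intro allI impI)
    fix \<epsilon> :: real assume eps: "\<epsilon> > 0"
    define r where "r = min \<epsilon> d0"
    have r0: "r > 0" using eps d0 by (simp add: r_def)
    obtain \<delta> where \<delta>: "\<delta> > 0" "\<And>z::st. norm z < \<delta> \<Longrightarrow> qM * (norm z)\<^sup>2 < qm * r\<^sup>2"
      using dl[OF r0] by blast
    show "\<exists>\<delta>>0. \<forall>T y. T \<ge> 0 \<and> solution_on P T y \<and> dist (y 0) p < \<delta> \<longrightarrow>
         (\<forall>t\<in>{0..T}. dist (y t) p < \<epsilon>)"
    proof (intro exI conjI allI impI ballI)
      show "\<delta> > 0" by (rule \<delta>(1))
      fix T y t assume H: "0 \<le> T \<and> solution_on P T y \<and> dist (y 0) p < \<delta>" and t: "t \<in> {0..T}"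
      have "\<forall>t\<in>{0..T}. norm (y t - p) < r"
        by (rule stay[OF loc qm0 qlow qup]) (use H \<delta> r0 in \<open>auto simp: r_def dist_norm\<close>)
      then show "dist (y t) p < \<epsilon>" using t by (auto simp: dist_norm r_def)
    qed
  qed
  obtain \<delta>a where \<delta>a: "\<delta>a > 0" "\<And>z::st. norm z < \<delta>a \<Longrightarrow> qM * (norm z)\<^sup>2 < qm * d0\<^sup>2"
    using dl[OF d0] by blast
  have attr: "\<forall>y. global_solution P y \<and> dist (y 0) p < \<delta>a \<longrightarrow> (y \<longlongrightarrow> p) at_top"
  proof (intro allI impI)
    fix y assume H: "global_solution P y \<and> dist (y 0) p < \<delta>a"
    let ?phi = "\<lambda>t. Bw q (y t - p) (y t - p)"
    have yder: "\<And>t. t \<ge> 0 \<Longrightarrow> (y has_vector_derivative field P (y t)) (at t within {0..})"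
      using H by (simp add: global_solution_def)
    have solT: "solution_on P T y" for T
      unfolding solution_on_def
      by (auto intro: has_vector_derivative_within_subset[OF yder])
    have inball: "norm (y t - p) < d0" if "t \<ge> 0" for t
    proof -
      have "\<forall>t\<in>{0..t}. norm (y t - p) < d0"
        by (rule stay[OF loc qm0 qlow qup solT]) (use that H \<delta>a d0 in \<open>auto simp: dist_norm\<close>)
      then show ?thesis using that by auto
    qed
    define k where "k = mu / qM"
    have k0: "k > 0" using mu qM0 by (simp add: k_def)
    define psi where "psi = (\<lambda>t. ?phi t * exp (k * t))"
    have phider: "(?phi has_real_derivative (2 * Bw q (y t - p) (field P (y t)))) (at t within {0..})"
      if "t \<ge> 0" for t
      by (rule phi_deriv[OF yder[OF that]])
    have psider: "(psi has_real_derivative (2 * Bw q (y t - p) (field P (y t)) * exp (k * t) + ?phi t * (exp (k * t) * k))) (at t within {0..})"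
      if "t \<ge> 0" for t
      unfolding psi_def
      by (rule derivative_eq_intros phider[OF that] | simp)+
    have psidec: "psi t \<le> psi 0" if t: "t \<ge> 0" for t
    proof (rule DERIV_nonpos_imp_decreasing_open[OF t])
      show "continuous_on {0..t} psi"
        by (rule continuous_on_subset[OF DERIV_continuous_on[OF psider]]) auto
      fix s assume s: "0 < s" "s < t"
      have "at s within {0..} = at s" by (rule at_within_interior) (use s in simp)
      then have d: "(psi has_real_derivative (2 * Bw q (y s - p) (field P (y s)) * exp (k * s) + ?phi s * (exp (k * s) * k))) (at s)"
        using psider[of s] s by simp
      have b1: "Bw q (y s - p) (field P (y s)) \<le> - (mu / 2) * (norm (y s - p))\<^sup>2"
        using loc2 inball[of s] s by simp
      have b2: "?phi s \<le> qM * (norm (y s - p))\<^sup>2" by (rule qup)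
      have "2 * Bw q (y s - p) (field P (y s)) + ?phi s * k \<le> 0"
      proof -
        have "?phi s * k \<le> qM * (norm (y s - p))\<^sup>2 * k" using b2 k0 by (simp add: mult_right_mono)
        also have "\<dots> = mu * (norm (y s - p))\<^sup>2" using qM0 by (simp add: k_def)
        finally show ?thesis using b1 by linarith
      qed
      then have "(2 * Bw q (y s - p) (field P (y s)) + ?phi s * k) * exp (k * s) \<le> 0"
        by (simp add: mult_nonpos_nonneg)
      then have "2 * Bw q (y s - p) (field P (y s)) * exp (k * s) + ?phi s * (exp (k * s) * k) \<le> 0"
        by (simp add: algebra_simps)
      with d show "\<exists>D. (psi has_real_derivative D) (at s) \<and> D \<le> 0" by blast
    qed
    define c where "c = ?phi 0 / qm"
    have bound: "norm (y t - p) \<le> sqrt (c * exp (- k * t))" if t: "t \<ge> 0" for t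
    proof -
      have "qm * (norm (y t - p))\<^sup>2 \<le> ?phi t" by (rule qlow)
      also have "?phi t = psi t * exp (- k * t)" by (simp add: psi_def mult.assoc flip: exp_add)
      also have "\<dots> \<le> psi 0 * exp (- k * t)" using psidec[OF t] by (simp add: mult_right_mono)
      also have "psi 0 = ?phi 0" by (simp add: psi_def)
      finally have "(norm (y t - p))\<^sup>2 \<le> c * exp (- k * t)"
        using qm0 by (simp add: c_def field_simps)
      then show ?thesis by (simp add: real_le_rsqrt)
    qed
    have "((\<lambda>t. sqrt (c * exp (- k * t))) \<longlongrightarrow> 0) at_top"
      using tendsto_real_sqrt[OF tendsto_mult_right_zero[OF exp_neg_tendsto[OF k0]], of c] by simp
    then have "((\<lambda>t. y t - p) \<longlongrightarrow> 0) at_top"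
      by (rule Lim_null_comparison[rotated]) (use bound in \<open>auto simp: eventually_at_top_linorder\<close>)
    then show "(y \<longlongrightarrow> p) at_top" by (rule LIM_zero_cancel)
  qed
  show ?thesis unfolding loc_asym_stable_def using stab attr \<delta>a(1) by blast
qed



definition Jat :: "params \<Rightarrow> real \<Rightarrow> real \<Rightarrow> st \<Rightarrow> st" where
  "Jat P c1 c2 z = (let D = 1 + ph P * pa0 P * c1; z1 = fst z; z2 = fst (snd z); z3 = fst (snd (snd z)); z4 = snd (snd (snd z)) in
    (z1 * G1 P 0 0 0 c1 c2 + c1 * (- pr1 P * z1 / pK01 P + pa0 P * c2 * ph P * pa0 P * z1 / D\<^sup>2 - pa0 P * z2 / D),
     z2 * G2 P 0 0 0 c1 c2 + c2 * (pe P * pa0 P * z1 / D\<^sup>2 - pr2 P * z2 / pK02 P),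
     (ps1 P)\<^sup>2 * (- pr1 P * c1 * z3 / ((psK1 P)\<^sup>2 * pK01 P) + (z3 - z4) * c2 * pa0 P / ((psa P)\<^sup>2 * D\<^sup>2)),
     (ps2 P)\<^sup>2 * (- pr2 P * c2 * z4 / ((psK2 P)\<^sup>2 * pK02 P) + pe P * (z3 - z4) * c1 * pa0 P / ((psa P)\<^sup>2 * D\<^sup>2))))"

lemma field_deriv:
  assumes pos: "pK01 P > 0" "pK02 P > 0" "psK1 P > 0" "psK2 P > 0" "pa0 P > 0" "psa P > 0" "ph P > 0"
    and c1: "c1 \<ge> 0"
  shows "(field P has_derivative Jat P c1 c2) (at (c1, c2, 0, 0))"
proof -
  have fe: "field P = (\<lambda>s. (fst s * (pr1 P * (1 - fst s / (pK01 P * exp (- ((fst (snd (snd s)))\<^sup>2) / (2 * (psK1 P)\<^sup>2))))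
        - pa0 P * exp (- ((fst (snd (snd s)) - snd (snd (snd s)))\<^sup>2) / (2 * (psa P)\<^sup>2)) * fst (snd s) / (1 + ph P * (pa0 P * exp (- ((fst (snd (snd s)) - snd (snd (snd s)))\<^sup>2) / (2 * (psa P)\<^sup>2))) * fst s)),
      fst (snd s) * (pe P * (pa0 P * exp (- ((fst (snd (snd s)) - snd (snd (snd s)))\<^sup>2) / (2 * (psa P)\<^sup>2))) * fst s / (1 + ph P * (pa0 P * exp (- ((fst (snd (snd s)) - snd (snd (snd s)))\<^sup>2) / (2 * (psa P)\<^sup>2))) * fst s) - pd P + pr2 P * (1 - fst (snd s) / (pK02 P * exp (- ((snd (snd (snd s)))\<^sup>2) / (2 * (psK2 P)\<^sup>2))))),
      (ps1 P)\<^sup>2 * (- (pr1 P * fst s * fst (snd (snd s))) / ((psK1 P)\<^sup>2 * (pK01 P * exp (- ((fst (snd (snd s)))\<^sup>2) / (2 * (psK1 P)\<^sup>2))))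
           + (fst (snd (snd s)) - snd (snd (snd s))) * fst (snd s) * (pa0 P * exp (- ((fst (snd (snd s)) - snd (snd (snd s)))\<^sup>2) / (2 * (psa P)\<^sup>2))) / ((psa P)\<^sup>2 * (1 + ph P * (pa0 P * exp (- ((fst (snd (snd s)) - snd (snd (snd s)))\<^sup>2) / (2 * (psa P)\<^sup>2))) * fst s)\<^sup>2)),
      (ps2 P)\<^sup>2 * (- (pr2 P * fst (snd s) * snd (snd (snd s))) / ((psK2 P)\<^sup>2 * (pK02 P * exp (- ((snd (snd (snd s)))\<^sup>2) / (2 * (psK2 P)\<^sup>2))))
           + pe P * (fst (snd (snd s)) - snd (snd (snd s))) * fst s * (pa0 P * exp (- ((fst (snd (snd s)) - snd (snd (snd s)))\<^sup>2) / (2 * (psa P)\<^sup>2))) / ((psa P)\<^sup>2 * (1 + ph P * (pa0 P * exp (- ((fst (snd (snd s)) - snd (snd (snd s)))\<^sup>2) / (2 * (psa P)\<^sup>2))) * fst s)\<^sup>2))))"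
    by (rule ext) (simp add: field_def Let_def K1_def K2_def acoef_def split: prod.split)
  have pne: "pK01 P \<noteq> 0" "pK02 P \<noteq> 0" "psK1 P \<noteq> 0" "psK2 P \<noteq> 0" "psa P \<noteq> 0" "1 + ph P * pa0 P * c1 \<noteq> 0"
  proof -
    have "ph P * pa0 P * c1 \<ge> 0" using pos c1 by simp
    then show "pK01 P \<noteq> 0" "pK02 P \<noteq> 0" "psK1 P \<noteq> 0" "psK2 P \<noteq> 0" "psa P \<noteq> 0" "1 + ph P * pa0 P * c1 \<noteq> 0"
      using pos by auto
  qed
  define Dv where "Dv = 1 + ph P * pa0 P * c1"
  have Dne: "Dv \<noteq> 0" using pne by (simp add: Dv_def)
  show ?thesis
    unfolding fe
    apply (rule has_derivative_eq_rhs)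
     apply (rule derivative_eq_intros refl | simp add: pne)+
    apply (rule ext)
    apply (simp add: Jat_def Let_def G1_def G2_def K1_def K2_def acoef_def Dv_def[symmetric])
    apply (intro conjI)
       apply (simp_all add: pne Dne field_simps power2_eq_square)
    apply (simp_all add: Dv_def algebra_simps)
    done
qed



lemma field_comp: "field P (x1, x2, u1, u2) =
     ( x1 * (pr1 P * (1 - x1 / K1 P u1) - acoef P u1 u2 * x2 / (1 + ph P * acoef P u1 u2 * x1)),
       x2 * (pe P * acoef P u1 u2 * x1 / (1 + ph P * acoef P u1 u2 * x1) - pd P + pr2 P * (1 - x2 / K2 P u2)),
       (ps1 P)\<^sup>2 * (- (pr1 P * x1 * u1) / ((psK1 P)\<^sup>2 * K1 P u1)
                     + (u1 - u2) * x2 * acoef P u1 u2 / ((psa P)\<^sup>2 * (1 + ph P * acoef P u1 u2 * x1)\<^sup>2)),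
       (ps2 P)\<^sup>2 * (- (pr2 P * x2 * u2) / ((psK2 P)\<^sup>2 * K2 P u2)
                     + pe P * (u1 - u2) * x1 * acoef P u1 u2 / ((psa P)\<^sup>2 * (1 + ph P * acoef P u1 u2 * x1)\<^sup>2)))"
  by (simp add: field_def Let_def)

lemma equil_iff: "is_equilibrium P (x1, x2, u1, u2) \<longleftrightarrow>
     x1 * (pr1 P * (1 - x1 / K1 P u1) - acoef P u1 u2 * x2 / (1 + ph P * acoef P u1 u2 * x1)) = 0 \<and>
     x2 * (pe P * acoef P u1 u2 * x1 / (1 + ph P * acoef P u1 u2 * x1) - pd P + pr2 P * (1 - x2 / K2 P u2)) = 0 \<and>
     (ps1 P)\<^sup>2 * (- (pr1 P * x1 * u1) / ((psK1 P)\<^sup>2 * K1 P u1)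
                     + (u1 - u2) * x2 * acoef P u1 u2 / ((psa P)\<^sup>2 * (1 + ph P * acoef P u1 u2 * x1)\<^sup>2)) = 0 \<and>
     (ps2 P)\<^sup>2 * (- (pr2 P * x2 * u2) / ((psK2 P)\<^sup>2 * K2 P u2)
                     + pe P * (u1 - u2) * x1 * acoef P u1 u2 / ((psa P)\<^sup>2 * (1 + ph P * acoef P u1 u2 * x1)\<^sup>2)) = 0"
  unfolding is_equilibrium_def field_comp by (simp add: zero_prod_def)

lemma K1_pos: "pK01 P > 0 \<Longrightarrow> K1 P v > 0" by (simp add: K1_def)
lemma K2_pos: "pK02 P > 0 \<Longrightarrow> K2 P v > 0" by (simp add: K2_def)
lemma a_pos: "pa0 P > 0 \<Longrightarrow> acoef P v w > 0" by (simp add: acoef_def)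
lemma K1_0: "K1 P 0 = pK01 P" by (simp add: K1_def)
lemma K2_0: "K2 P 0 = pK02 P" by (simp add: K2_def)
lemma a_00: "acoef P v v = pa0 P" by (simp add: acoef_def)
lemma K1_le: "pK01 P > 0 \<Longrightarrow> K1 P v \<le> pK01 P" by (simp add: K1_def mult_le_cancel_left1)
lemma K2_le: "pK02 P > 0 \<Longrightarrow> K2 P v \<le> pK02 P" by (simp add: K2_def mult_le_cancel_left1)
lemma a_le: "pa0 P > 0 \<Longrightarrow> acoef P v w \<le> pa0 P" by (simp add: acoef_def mult_le_cancel_left1)

lemma a_less:
  assumes "pa0 P > 0" "psa P > 0" "(v1 - v2)\<^sup>2 > (w1 - w2)\<^sup>2"
  shows "acoef P v1 v2 < acoef P w1 w2"
proof -
  have "- ((v1 - v2)\<^sup>2) / (2 * (psa P)\<^sup>2) < - ((w1 - w2)\<^sup>2) / (2 * (psa P)\<^sup>2)"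
    using assms by (simp add: divide_strict_right_mono)
  then show ?thesis using assms(1) by (simp add: acoef_def)
qed

lemma g_mono:
  fixes a b y :: real
  assumes "0 \<le> a" "a \<le> b" "y \<ge> 0" "h > 0"
  shows "a / (1 + h * a * y) \<le> b / (1 + h * b * y)"
proof -
  have p1: "1 + h * a * y > 0" using assms by (simp add: add_pos_nonneg)
  have p2: "1 + h * b * y > 0" using assms by (simp add: add_pos_nonneg)
  have "a * (1 + h * b * y) \<le> b * (1 + h * a * y)" using assms by (simp add: algebra_simps)
  then show ?thesis using p1 p2 by (simp add: divide_simps)
qed

lemma g_strict:
  fixes a b y :: real
  assumes "0 \<le> a" "a < b" "y \<ge> 0" "h > 0"
  shows "a / (1 + h * a * y) < b / (1 + h * b * y)"
proof -
  have p1: "1 + h * a * y > 0" using assms by (simp add: add_pos_nonneg)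
  have p2: "1 + h * b * y > 0" using assms by (simp add: add_pos_nonneg)
  have "a * (1 + h * b * y) < b * (1 + h * a * y)" using assms by (simp add: algebra_simps)
  then show ?thesis using p1 p2 by (simp add: divide_simps)
qed

lemma not_LAS_zero:
  shows "\<not> loc_asym_stable P (0, 0, w1, w2)"
proof
  assume "loc_asym_stable P (0, 0, w1, w2)"
  then obtain \<delta> where \<delta>: "\<delta> > 0"
    and att: "\<And>y. global_solution P y \<and> dist (y 0) (0, 0, w1, w2) < \<delta> \<Longrightarrow> (y \<longlongrightarrow> (0, 0, w1, w2)) at_top"
    unfolding loc_asym_stable_def by blast
  define c :: st where "c = (0, 0, w1 + \<delta> / 2, w2)"
  have f0: "field P c = 0" by (simp add: c_def field_comp zero_prod_def)
  have gs: "global_solution P (\<lambda>t. c)"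
    unfolding global_solution_def f0 by simp
  have "dist c (0, 0, w1, w2) = \<delta> / 2"
    using \<delta> by (simp add: c_def dist_norm norm_Pair)
  then have "dist c (0, 0, w1, w2) < \<delta>" using \<delta> by simp
  then have "((\<lambda>t::real. c) \<longlongrightarrow> (0, 0, w1, w2)) at_top" using att[of "\<lambda>t. c"] gs by blast
  then have "c = (0, 0, w1, w2)" by (simp add: tendsto_const_iff)
  then show False using \<delta> by (simp add: c_def)
qed

lemma ess_cases:
  assumes pos: "pK01 P > 0" "pK02 P > 0" "psK1 P > 0" "psK2 P > 0" "pa0 P > 0" "psa P > 0"
      "pr1 P > 0" "pr2 P > 0" "ph P > 0" "pe P > 0" "ps1 P > 0" "ps2 P > 0"
    and ess: "ESS P y1 y2 w1 w2"
  shows "(y1 = pK01 P \<and> y2 = 0 \<and> w1 = 0 \<and> w2 = 0) \<or> (y1 > 0 \<and> y2 > 0 \<and> w1 = 0 \<and> w2 = 0)"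
proof -
  have eq: "is_equilibrium P (y1, y2, w1, w2)" and las: "loc_asym_stable P (y1, y2, w1, w2)"
    and y1: "y1 \<ge> 0" and y2: "y2 \<ge> 0"
    and G1max: "\<And>v. G1 P v w1 w2 y1 y2 \<le> G1 P w1 w1 w2 y1 y2"
    using ess unfolding ESS_def by auto
  define a where "a = acoef P w1 w2"
  have a0: "a > 0" using pos by (simp add: a_def a_pos)
  define D where "D = 1 + ph P * a * y1"
  have D0: "D > 0" using a0 y1 pos by (simp add: D_def add_pos_nonneg)
  have K1p: "K1 P w1 > 0" using pos by (simp add: K1_pos)
  have K2p: "K2 P w2 > 0" using pos by (simp add: K2_pos)
  have E1: "y1 * (pr1 P * (1 - y1 / K1 P w1) - a * y2 / D) = 0"
    and E2: "y2 * (pe P * a * y1 / D - pd P + pr2 P * (1 - y2 / K2 P w2)) = 0"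
    and E3: "- (pr1 P * y1 * w1) / ((psK1 P)\<^sup>2 * K1 P w1) + (w1 - w2) * y2 * a / ((psa P)\<^sup>2 * D\<^sup>2) = 0"
    and E4: "- (pr2 P * y2 * w2) / ((psK2 P)\<^sup>2 * K2 P w2) + pe P * (w1 - w2) * y1 * a / ((psa P)\<^sup>2 * D\<^sup>2) = 0"
    using eq pos unfolding equil_iff a_def[symmetric] D_def[symmetric] by auto
  show ?thesis
  proof (cases "y1 = 0")
    case True
    show ?thesis
    proof (cases "y2 = 0")
      case True
      with \<open>y1 = 0\<close> las not_LAS_zero show ?thesis by blast
    next
      case False
      then have y2p: "y2 > 0" using y2 by simp
      define v where "v = w2 + \<bar>w1 - w2\<bar> + 1"
      have "(v - w2)\<^sup>2 > (w1 - w2)\<^sup>2"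
      proof -
        have "\<bar>w1 - w2\<bar> < \<bar>v - w2\<bar>" by (simp add: v_def)
        then show ?thesis using abs_le_square_iff[of "v - w2" "w1 - w2"] by linarith
      qed
      then have "acoef P v w2 < a" unfolding a_def using pos by (intro a_less) auto
      then have "G1 P v w1 w2 y1 y2 > G1 P w1 w1 w2 y1 y2"
        using y2p \<open>y1 = 0\<close> by (simp add: G1_def a_def)
      with G1max[of v] show ?thesis by simp
    qed
  next
    case False
    then have y1p: "y1 > 0" using y1 by simp
    show ?thesis
    proof (cases "y2 = 0")
      case True
      have "pr1 P * (1 - y1 / K1 P w1) = 0" using E1 y1p True by simp
      then have yK: "y1 = K1 P w1" using pos K1p by (simp add: field_simps)
      have "pr1 P * w1 / (psK1 P)\<^sup>2 = 0"
        using E3 True yK K1p by (simp add: field_simps)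
      then have w1: "w1 = 0" using pos by simp
      have "pe P * (w1 - w2) * y1 * a / ((psa P)\<^sup>2 * D\<^sup>2) = 0" using E4 True by simp
      then have "w2 = 0" using pos y1p a0 D0 w1 by simp
      then show ?thesis using yK w1 True by (simp add: K1_0)
    next
      case False
      then have y2p: "y2 > 0" using y2 by simp
      define X1 where "X1 = pr1 P * y1 / ((psK1 P)\<^sup>2 * K1 P w1)"
      define Y1 where "Y1 = y2 * a / ((psa P)\<^sup>2 * D\<^sup>2)"
      define X2 where "X2 = pr2 P * y2 / ((psK2 P)\<^sup>2 * K2 P w2)"
      define Y2 where "Y2 = pe P * y1 * a / ((psa P)\<^sup>2 * D\<^sup>2)"
      have pX: "X1 > 0" "Y1 > 0" "X2 > 0" "Y2 > 0"
        using pos y1p y2p K1p K2p a0 D0 by (simp_all add: X1_def Y1_def X2_def Y2_def)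
      have e3: "w1 * X1 = (w1 - w2) * Y1" using E3 by (simp add: X1_def Y1_def field_simps)
      have e4: "w2 * X2 = (w1 - w2) * Y2" using E4 by (simp add: X2_def Y2_def field_simps)
      show ?thesis
      proof (cases "w1 = w2")
        case True
        then have "w1 * X1 = 0" using e3 by simp
        then have "w1 = 0" using pX by simp
        then show ?thesis using True y1p y2p by simp
      next
        case False
        have "(w1 * w2) * (X1 * X2) = (w1 - w2)\<^sup>2 * (Y1 * Y2)"
          using e3 e4 by (simp add: power2_eq_square) (metis mult.assoc mult.commute)
        moreover have "(w1 - w2)\<^sup>2 * (Y1 * Y2) > 0" using False pX by simp
        ultimately have "(w1 * w2) * (X1 * X2) > 0" by simp
        moreover have xx: "X1 * X2 > 0" using pX by simp
        ultimately have w12: "w1 * w2 > 0"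
          using mult_nonpos_nonneg[of "w1 * w2" "X1 * X2"] by linarith
        have "(-w1 - w2)\<^sup>2 > (w1 - w2)\<^sup>2" using w12 by (simp add: power2_eq_square algebra_simps)
        then have al: "acoef P (-w1) w2 < a" unfolding a_def using pos by (intro a_less) auto
        have "acoef P (-w1) w2 / (1 + ph P * acoef P (-w1) w2 * y1) < a / (1 + ph P * a * y1)"
          using g_strict[OF _ al _ pos(9)] pos y1 by (simp add: a_pos less_imp_le)
        then have "acoef P (-w1) w2 * y2 / (1 + ph P * acoef P (-w1) w2 * y1) < a * y2 / (1 + ph P * a * y1)"
          using mult_strict_right_mono[OF _ y2p] by fastforce
        moreover have "K1 P (-w1) = K1 P w1" by (simp add: K1_def)
        ultimately have "G1 P (-w1) w1 w2 y1 y2 > G1 P w1 w1 w2 y1 y2"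
          by (simp add: G1_def a_def)
        with G1max[of "-w1"] show ?thesis by simp
      qed
    qed
  qed
qed



lemma quad1:
  fixes r g B z1 z2 :: real
  assumes "r > 0" "g > 0"
  shows "z1 * (- r * z1 - B * z2) + (B\<^sup>2 / (r * g) + 1) * z2 * (- g * z2) \<le> - (r / 2) * z1\<^sup>2 - g * z2\<^sup>2"
proof -
  have sq: "0 \<le> (r / 2) * (z1 + B * z2 / r)\<^sup>2" using assms by simp
  have e1: "(r / 2) * (z1 + B * z2 / r)\<^sup>2 = (r / 2) * z1\<^sup>2 + B * z1 * z2 + B\<^sup>2 / (2 * r) * z2\<^sup>2"
    using assms by (simp add: power2_eq_square field_simps)
  have e2: "(B\<^sup>2 / (r * g) + 1) * z2 * (- g * z2) = - (B\<^sup>2 / r) * z2\<^sup>2 - g * z2\<^sup>2"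
    using assms by (simp add: power2_eq_square field_simps)
  have e3: "z1 * (- r * z1 - B * z2) = - r * z1\<^sup>2 - B * z1 * z2"
    by (simp add: power2_eq_square algebra_simps)
  have e4: "B\<^sup>2 / r * z2\<^sup>2 = B\<^sup>2 / (2 * r) * z2\<^sup>2 + B\<^sup>2 / (2 * r) * z2\<^sup>2"
    by (simp add: field_simps)
  have "0 \<le> B\<^sup>2 / (2 * r) * z2\<^sup>2" using assms by simp
  then show ?thesis using sq e1 e2 e3 e4 by linarith
qed

lemma quad2:
  fixes s E z3 z4 :: real
  assumes "s > 0" "E > 0"
  shows "(E / s + 1) * z3 * (- s * z3) + z4 * (E * (z3 - z4)) \<le> - s * z3\<^sup>2 - (E / 2) * z4\<^sup>2"
proof -
  have "0 \<le> (E / 2) * (z3 - z4)\<^sup>2" using assms by simp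
  moreover have "(E / 2) * (z3 - z4)\<^sup>2 = (E / 2) * z3\<^sup>2 - E * z3 * z4 + (E / 2) * z4\<^sup>2"
    by (simp add: power2_eq_square field_simps)
  moreover have "(E / s + 1) * z3 * (- s * z3) = - E * z3\<^sup>2 - s * z3\<^sup>2"
    using assms by (simp add: power2_eq_square field_simps)
  moreover have "z4 * (E * (z3 - z4)) = E * z3 * z4 - E * z4\<^sup>2"
    by (simp add: power2_eq_square algebra_simps)
  moreover have "0 \<le> (E / 2) * z3\<^sup>2" using assms by simp
  ultimately show ?thesis by linarith
qed

lemma sum4_bound:
  fixes z :: st and mu c1 c2 c3 c4 :: real
  assumes "mu \<le> c1" "mu \<le> c2" "mu \<le> c3" "mu \<le> c4"
    and "X \<le> - c1 * (fst z)\<^sup>2 - c2 * (fst (snd z))\<^sup>2 - c3 * (fst (snd (snd z)))\<^sup>2 - c4 * (snd (snd (snd z)))\<^sup>2"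
  shows "X \<le> - mu * (norm z)\<^sup>2"
proof -
  have "\<And>c a::real. mu \<le> c \<Longrightarrow> c * a\<^sup>2 \<ge> mu * a\<^sup>2" by (simp add: mult_right_mono)
  then have "c1 * (fst z)\<^sup>2 \<ge> mu * (fst z)\<^sup>2" "c2 * (fst (snd z))\<^sup>2 \<ge> mu * (fst (snd z))\<^sup>2"
    "c3 * (fst (snd (snd z)))\<^sup>2 \<ge> mu * (fst (snd (snd z)))\<^sup>2" "c4 * (snd (snd (snd z)))\<^sup>2 \<ge> mu * (snd (snd (snd z)))\<^sup>2"
    using assms by auto
  then show ?thesis using assms(5) unfolding norm_st_sq by (simp add: distrib_left)
qed

lemma gmono2:
  fixes a b y e h :: real
  assumes "0 \<le> a" "a \<le> b" "y \<ge> 0" "h > 0" "e \<ge> 0"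
  shows "e * a * y / (1 + h * a * y) \<le> e * b * y / (1 + h * b * y)"
proof -
  have "a / (1 + h * a * y) \<le> b / (1 + h * b * y)" by (rule g_mono) (use assms in auto)
  then have "e * y * (a / (1 + h * a * y)) \<le> e * y * (b / (1 + h * b * y))"
    by (rule mult_left_mono) (use assms in simp)
  then show ?thesis by (simp add: algebra_simps)
qed

lemma hmono:
  fixes s t a h e :: real
  assumes "0 \<le> s" "s \<le> t" "a \<ge> 0" "h > 0" "e \<ge> 0"
  shows "e * a * s / (1 + h * a * s) \<le> e * a * t / (1 + h * a * t)"
proof -
  have "e * s * a / (1 + h * s * a) \<le> e * t * a / (1 + h * t * a)"
    by (rule gmono2) (use assms in auto)
  moreover have "e * s * a = e * a * s" "h * s * a = h * a * s" "e * t * a = e * a * t" "h * t * a = h * a * t"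
    by (simp_all add: algebra_simps)
  ultimately show ?thesis by simp
qed

lemma part1:
  assumes pos: "pK01 P > 0" "pK02 P > 0" "psK1 P > 0" "psK2 P > 0" "pa0 P > 0" "psa P > 0"
      "pr1 P > 0" "pr2 P > 0" "ph P > 0" "pe P > 0" "ps1 P > 0" "ps2 P > 0"
    and dn: "pd P \<ge> 0"
    and H: "pr2 P + pe P * pa0 P * pK01 P / (1 + pa0 P * ph P * pK01 P) < pd P"
  shows "unique_ESS P (pK01 P) 0 0 0"
proof -
  define K where "K = pK01 P"
  have Kp: "K > 0" using pos by (simp add: K_def)
  define D where "D = 1 + ph P * pa0 P * K"
  have Dp: "D > 0" using pos Kp by (simp add: D_def add_pos_nonneg)
  have G1val: "G1 P 0 0 0 K 0 = 0" using Kp by (simp add: G1_def K1_0 a_00 K_def)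
  have G2val: "G2 P 0 0 0 K 0 = pe P * pa0 P * K / D - pd P + pr2 P"
    by (simp add: G2_def K2_0 a_00 D_def mult.assoc)
  have HD: "pr2 P + pe P * pa0 P * K / D < pd P"
    using H by (simp add: K_def D_def mult.commute mult.left_commute)
  define g where "g = - G2 P 0 0 0 K 0"
  have gp: "g > 0" using HD by (simp add: g_def G2val)
  define B where "B = K * pa0 P / D"
  define s1 where "s1 = (ps1 P)\<^sup>2 * pr1 P / (psK1 P)\<^sup>2"
  define E where "E = (ps2 P)\<^sup>2 * pe P * K * pa0 P / ((psa P)\<^sup>2 * D\<^sup>2)"
  have s1p: "s1 > 0" using pos by (simp add: s1_def)
  have Ep: "E > 0" using pos Kp Dp by (simp add: E_def)
  have Jz: "Jat P K 0 z = (- pr1 P * fst z - B * fst (snd z), - g * fst (snd z), - s1 * fst (snd (snd z)),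
              E * (fst (snd (snd z)) - snd (snd (snd z))))" for z
    using Kp Dp pos
    apply (simp only: Jat_def Let_def)
    apply (simp add: K_def[symmetric] D_def[symmetric] G1val g_def)
    apply (simp add: B_def s1_def E_def field_simps)
    done
  have eq: "is_equilibrium P (K, 0, 0, 0)"
    using Kp by (simp add: equil_iff K1_0 a_00 K2_0 K_def)
  have der: "(field P has_derivative Jat P K 0) (at (K, 0, 0, 0))"
    by (rule field_deriv) (use pos Kp in auto)
  define q :: st where "q = (1, B\<^sup>2 / (pr1 P * g) + 1, E / s1 + 1, 1)"
  define mu where "mu = min (min (pr1 P / 2) g) (min s1 (E / 2))"
  have mup: "mu > 0" using pos gp s1p Ep by (simp add: mu_def)
  have qp: "fst q > 0" "fst (snd q) > 0" "fst (snd (snd q)) > 0" "snd (snd (snd q)) > 0"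
    using pos gp s1p Ep by (simp_all add: q_def add_nonneg_pos)
  have neg: "Bw q z (Jat P K 0 z) \<le> - mu * (norm z)\<^sup>2" for z
  proof (rule sum4_bound[of mu "pr1 P / 2" g s1 "E / 2"])
    show "mu \<le> pr1 P / 2" "mu \<le> g" "mu \<le> s1" "mu \<le> E / 2" by (simp_all add: mu_def)
    have "Bw q z (Jat P K 0 z) =
       (fst z * (- pr1 P * fst z - B * fst (snd z)) + (B\<^sup>2 / (pr1 P * g) + 1) * fst (snd z) * (- g * fst (snd z)))
       + ((E / s1 + 1) * fst (snd (snd z)) * (- s1 * fst (snd (snd z))) + snd (snd (snd z)) * (E * (fst (snd (snd z)) - snd (snd (snd z)))))"
      by (simp add: Bw_def Jz q_def)
    also have "\<dots> \<le> (- (pr1 P / 2) * (fst z)\<^sup>2 - g * (fst (snd z))\<^sup>2) + (- s1 * (fst (snd (snd z)))\<^sup>2 - (E / 2) * (snd (snd (snd z)))\<^sup>2)"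
      by (rule add_mono[OF quad1 quad2]) (use pos gp s1p Ep in auto)
    finally show "Bw q z (Jat P K 0 z) \<le> - (pr1 P / 2) * (fst z)\<^sup>2 - g * (fst (snd z))\<^sup>2 - s1 * (fst (snd (snd z)))\<^sup>2 - E / 2 * (snd (snd (snd z)))\<^sup>2"
      by simp
  qed
  have las: "loc_asym_stable P (K, 0, 0, 0)"
    by (rule lyap_LAS[OF _ der qp mup neg]) (use eq in \<open>simp add: is_equilibrium_def\<close>)
  have G1max: "G1 P v 0 0 K 0 \<le> G1 P 0 0 0 K 0" for v
  proof -
    have "K1 P v \<le> K" using pos by (simp add: K1_le K_def)
    moreover have "K1 P v > 0" using pos by (simp add: K1_pos)
    ultimately have "K / K1 P v \<ge> 1" by (simp add: divide_simps)
    then show ?thesis using pos Kp by (simp add: G1_def K1_0 K_def mult_nonneg_nonpos)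
  qed
  have G2max: "G2 P v 0 0 K 0 \<le> G2 P 0 0 0 K 0" for v
  proof -
    have "pe P * acoef P 0 v * K / (1 + ph P * acoef P 0 v * K) \<le> pe P * pa0 P * K / (1 + ph P * pa0 P * K)"
      by (rule gmono2) (use pos Kp a_le[of P 0 v] a_pos[of P 0 v] in auto)
    then show ?thesis by (simp add: G2_def a_00 K2_0)
  qed
  have ess: "ESS P K 0 0 0"
    unfolding ESS_def using eq las Kp G1max G2max G1val gp by (simp add: g_def)
  have uniq: "(y1, y2, w1, w2) = (K, 0, 0, 0)" if e: "ESS P y1 y2 w1 w2" for y1 y2 w1 w2
  proof -
    from ess_cases[OF pos e] show ?thesis
    proof
      assume "y1 = pK01 P \<and> y2 = 0 \<and> w1 = 0 \<and> w2 = 0"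
      then show ?thesis by (simp add: K_def)
    next
      assume c: "y1 > 0 \<and> y2 > 0 \<and> w1 = 0 \<and> w2 = 0"
      then have y1p: "y1 > 0" and y2p: "y2 > 0" and w: "w1 = 0" "w2 = 0" by auto
      have g1: "G1 P 0 0 0 y1 y2 = 0" and g2: "G2 P 0 0 0 y1 y2 = 0"
        using e y1p y2p w unfolding ESS_def by auto
      have Dy: "1 + ph P * pa0 P * y1 > 0" using pos y1p by (simp add: add_pos_nonneg)
      have "pr1 P * (1 - y1 / K) = pa0 P * y2 / (1 + ph P * pa0 P * y1)"
        using g1 by (simp add: G1_def K1_0 a_00 K_def)
      moreover have "pa0 P * y2 / (1 + ph P * pa0 P * y1) > 0" using pos y2p Dy by simp
      ultimately have "pr1 P * (1 - y1 / K) > 0" by simp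
      then have "1 - y1 / K > 0" using pos(7) zero_less_mult_pos by blast
      then have yK: "y1 \<le> K" using Kp by (simp add: field_simps)
      have "pe P * pa0 P * y1 / (1 + ph P * pa0 P * y1) \<le> pe P * pa0 P * K / (1 + ph P * pa0 P * K)"
        by (rule hmono) (use pos y1p yK in auto)
      moreover have "pr2 P * y2 / pK02 P > 0" using pos y2p by simp
      moreover have "G2 P 0 0 0 y1 y2 = pe P * pa0 P * y1 / (1 + ph P * pa0 P * y1) - pd P + pr2 P - pr2 P * y2 / pK02 P"
        by (simp add: G2_def K2_0 a_00 algebra_simps)
      ultimately have "G2 P 0 0 0 y1 y2 < 0" using HD by (simp add: D_def)
      then show ?thesis using g2 by simp
    qed
  qed
  show ?thesis unfolding unique_ESS_def K_def[symmetric] using ess uniq by blast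
qed

lemma key_ineq:
  assumes pos: "pK01 P > 0" "pK02 P > 0" "psK1 P > 0" "psK2 P > 0" "pa0 P > 0" "psa P > 0"
      "pr1 P > 0" "pr2 P > 0" "ph P > 0" "pe P > 0"
    and c: "c1 > 0" "c2 > 0"
    and C5: "psK2 P / psK1 P * sqrt (pr1 P * pe P * pK02 P / (pr2 P * pK01 P)) > c2 / c1"
    and C6: "(psa P)\<^sup>2 / (psK1 P * psK2 P) > sqrt (pe P * pK01 P * pK02 P / (pr1 P * pr2 P)) * pa0 P"
  shows "c2 * pa0 P * pK01 P * (psK1 P)\<^sup>2 < (psa P)\<^sup>2 * pr1 P * c1"
proof -
  define S1 where "S1 = sqrt (pr1 P * pe P * pK02 P / (pr2 P * pK01 P))"
  have S1p: "S1 > 0" using pos by (simp add: S1_def)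
  have S1sq: "S1\<^sup>2 = pr1 P * pe P * pK02 P / (pr2 P * pK01 P)" using pos by (simp add: S1_def)
  have S2: "sqrt (pe P * pK01 P * pK02 P / (pr1 P * pr2 P)) = S1 * (pK01 P / pr1 P)"
  proof (rule real_sqrt_unique)
    show "(S1 * (pK01 P / pr1 P))\<^sup>2 = pe P * pK01 P * pK02 P / (pr1 P * pr2 P)"
      unfolding power_mult_distrib S1sq using pos by (simp add: power2_eq_square field_simps)
    show "0 \<le> S1 * (pK01 P / pr1 P)" using S1p pos by simp
  qed
  have C6': "S1 * (pK01 P / pr1 P) * pa0 P < (psa P)\<^sup>2 / (psK1 P * psK2 P)" using C6 S2 by simp
  have "S1 * (pK01 P / pr1 P) * pa0 P * (c2 / c1) < (psa P)\<^sup>2 / (psK1 P * psK2 P) * (psK2 P / psK1 P * S1)"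
    by (rule mult_strict_mono[OF C6' C5[folded S1_def]]) (use pos c S1p in auto)
  moreover have "(psa P)\<^sup>2 / (psK1 P * psK2 P) * (psK2 P / psK1 P * S1) = S1 * ((psa P)\<^sup>2 / (psK1 P)\<^sup>2)"
    using pos by (simp add: power2_eq_square field_simps)
  moreover have "S1 * (pK01 P / pr1 P) * pa0 P * (c2 / c1) = S1 * (pK01 P * pa0 P * c2 / (pr1 P * c1))"
    using pos c by (simp add: field_simps)
  ultimately have "S1 * (pK01 P * pa0 P * c2 / (pr1 P * c1)) < S1 * ((psa P)\<^sup>2 / (psK1 P)\<^sup>2)"
    by linarith
  then have "pK01 P * pa0 P * c2 / (pr1 P * c1) < (psa P)\<^sup>2 / (psK1 P)\<^sup>2"
    using mult_less_cancel_left_pos[OF S1p] by blast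
  then show ?thesis using pos c by (simp add: field_simps)
qed

lemma phi_strict:
  fixes K h a y z :: real
  assumes "0 \<le> y" "y < z" "h * a * K < 1" "K > 0" "h > 0" "a > 0"
  shows "(1 - z / K) * (1 + h * a * z) < (1 - y / K) * (1 + h * a * y)"
proof -
  have "(1 - y / K) * (1 + h * a * y) - (1 - z / K) * (1 + h * a * z) = (z - y) * (1 / K - h * a + h * a * (y + z) / K)"
    using assms by (simp add: field_simps)
  moreover have "1 / K - h * a > 0" using assms by (simp add: field_simps)
  moreover have "h * a * (y + z) / K \<ge> 0" using assms by simp
  ultimately show ?thesis using assms by (smt (verit) mult_pos_pos)
qed

lemma div_le_self_ge1:
  fixes x d :: real
  assumes "x \<ge> 0" "d \<ge> 1"
  shows "x / d \<le> x"
proof -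
  have "x * 1 \<le> x * d" using assms by (intro mult_left_mono) auto
  then show ?thesis using assms by (simp add: divide_simps)
qed

lemma G1max2:
  assumes pos: "pK01 P > 0" "psK1 P > 0" "pa0 P > 0" "psa P > 0" "pr1 P > 0" "ph P > 0"
    and c: "c1 > 0" "c2 > 0"
    and KEY: "c2 * pa0 P * pK01 P * (psK1 P)\<^sup>2 < (psa P)\<^sup>2 * pr1 P * c1"
  shows "G1 P v 0 0 c1 c2 \<le> G1 P 0 0 0 c1 c2"
proof -
  define t where "t = v\<^sup>2"
  have t0: "t \<ge> 0" by (simp add: t_def)
  define X where "X = exp (t / (2 * (psK1 P)\<^sup>2))"
  define Y where "Y = exp (- (t / (2 * (psa P)\<^sup>2)))"
  have K1v: "K1 P v = pK01 P / X" by (simp add: K1_def X_def t_def exp_minus field_simps)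
  have av: "acoef P v 0 = pa0 P * Y" by (simp add: acoef_def Y_def t_def)
  have Xge: "X \<ge> 1 + t / (2 * (psK1 P)\<^sup>2)" unfolding X_def by (rule exp_ge_add_one_self)
  have Yge: "Y \<ge> 1 - t / (2 * (psa P)\<^sup>2)" unfolding Y_def using exp_ge_add_one_self[of "- (t / (2 * (psa P)\<^sup>2))"] by simp
  have Yle: "Y \<le> 1" unfolding Y_def using t0 pos by simp
  have Yp: "Y > 0" by (simp add: Y_def)
  define Da where "Da = 1 + ph P * pa0 P * c1"
  define Db where "Db = 1 + ph P * (pa0 P * Y) * c1"
  have Da1: "Da \<ge> 1" using pos c by (simp add: Da_def)
  have Db1: "Db \<ge> 1" using pos c Yp by (simp add: Db_def)
  have iden: "pa0 P / Da - pa0 P * Y / Db = pa0 P * (1 - Y) / (Da * Db)"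
    using Da1 Db1 by (simp add: Da_def Db_def field_simps)
  have "pa0 P * (1 - Y) / (Da * Db) \<le> pa0 P * (1 - Y)"
  proof (rule div_le_self_ge1)
    show "0 \<le> pa0 P * (1 - Y)" using pos Yle by simp
    show "1 \<le> Da * Db" using mult_mono[OF Da1 Db1] Da1 by simp
  qed
  also have "\<dots> \<le> pa0 P * (t / (2 * (psa P)\<^sup>2))" using Yge pos by (intro mult_left_mono) auto
  finally have L: "c2 * (pa0 P / Da - pa0 P * Y / Db) \<le> c2 * (pa0 P * (t / (2 * (psa P)\<^sup>2)))"
    using c iden by (intro mult_left_mono) auto
  have R: "pr1 P * c1 * (t / (2 * (psK1 P)\<^sup>2)) / pK01 P \<le> pr1 P * c1 * (X - 1) / pK01 P"
    using Xge pos c by (intro divide_right_mono mult_left_mono) auto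
  have M: "c2 * (pa0 P * (t / (2 * (psa P)\<^sup>2))) \<le> pr1 P * c1 * (t / (2 * (psK1 P)\<^sup>2)) / pK01 P"
  proof -
    have "c2 * pa0 P * pK01 P * (psK1 P)\<^sup>2 * t \<le> (psa P)\<^sup>2 * pr1 P * c1 * t"
      using KEY t0 by (intro mult_right_mono) auto
    then show ?thesis using pos by (simp add: field_simps)
  qed
  have "G1 P 0 0 0 c1 c2 - G1 P v 0 0 c1 c2 = pr1 P * c1 * (X - 1) / pK01 P - c2 * (pa0 P / Da - pa0 P * Y / Db)"
    using pos by (simp add: G1_def K1v K1_0 a_00 av Da_def Db_def field_simps)
  then show ?thesis using L R M by linarith
qed

lemma G1_zero_eq:
  assumes pos: "pK01 P > 0" "pa0 P > 0" "ph P > 0" and x1: "x1 \<ge> 0"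
    and g1: "G1 P 0 0 0 x1 x2 = 0"
  shows "pa0 P * x2 = pr1 P * (1 - x1 / pK01 P) * (1 + ph P * pa0 P * x1)"
proof -
  have Dp: "1 + ph P * pa0 P * x1 > 0" using pos x1 by (simp add: add_pos_nonneg)
  have "pr1 P * (1 - x1 / pK01 P) = pa0 P * x2 / (1 + ph P * pa0 P * x1)"
    using g1 by (simp add: G1_def K1_0 a_00)
  then show ?thesis using Dp pos by (simp add: field_simps)
qed

lemma G2_0_eq: "G2 P 0 0 0 x1 x2 = pe P * pa0 P * x1 / (1 + ph P * pa0 P * x1) - pd P + pr2 P - pr2 P * x2 / pK02 P"
  by (simp add: G2_def K2_0 a_00 algebra_simps)

lemma int_no_less:
  assumes pos: "pK01 P > 0" "pK02 P > 0" "pa0 P > 0" "pr2 P > 0" "ph P > 0" "pe P > 0" "pr1 P > 0"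
    and hK: "ph P * pa0 P * pK01 P < 1"
    and x: "x1 \<ge> 0" "x1 < y1"
    and g1x: "G1 P 0 0 0 x1 x2 = 0" and g2x: "G2 P 0 0 0 x1 x2 = 0"
    and g1y: "G1 P 0 0 0 y1 y2 = 0" and g2y: "G2 P 0 0 0 y1 y2 = 0"
  shows False
proof -
  have y1: "y1 \<ge> 0" using x by simp
  have ex: "pa0 P * x2 = pr1 P * (1 - x1 / pK01 P) * (1 + ph P * pa0 P * x1)"
    by (rule G1_zero_eq[OF pos(1) pos(3) pos(5) x(1) g1x])
  have ey: "pa0 P * y2 = pr1 P * (1 - y1 / pK01 P) * (1 + ph P * pa0 P * y1)"
    by (rule G1_zero_eq[OF pos(1) pos(3) pos(5) y1 g1y])
  have ph: "(1 - y1 / pK01 P) * (1 + ph P * pa0 P * y1) < (1 - x1 / pK01 P) * (1 + ph P * pa0 P * x1)"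
    by (rule phi_strict) (use x hK pos in auto)
  have mono: "pe P * pa0 P * x1 / (1 + ph P * pa0 P * x1) \<le> pe P * pa0 P * y1 / (1 + ph P * pa0 P * y1)"
    by (rule hmono) (use x pos in auto)
  have "pr1 P * ((1 - y1 / pK01 P) * (1 + ph P * pa0 P * y1)) < pr1 P * ((1 - x1 / pK01 P) * (1 + ph P * pa0 P * x1))"
    using ph pos(7) by simp
  then have "pa0 P * y2 < pa0 P * x2" using ex ey by (simp add: mult.assoc)
  then have "y2 < x2" using pos by simp
  then have "pr2 P * y2 / pK02 P < pr2 P * x2 / pK02 P" using pos by (simp add: divide_strict_right_mono)
  then show False using g2x g2y mono unfolding G2_0_eq by linarith
qed



lemma part2:
  assumes pos: "pK01 P > 0" "pK02 P > 0" "psK1 P > 0" "psK2 P > 0" "pa0 P > 0" "psa P > 0"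
      "pr1 P > 0" "pr2 P > 0" "ph P > 0" "pe P > 0" "ps1 P > 0" "ps2 P > 0"
    and dn: "pd P \<ge> 0"
    and c: "c1 > 0" "c2 > 0" and eq: "is_equilibrium P (c1, c2, 0, 0)"
    and C2: "pK01 P * pa0 P < 1 / ph P"
    and C5: "psK2 P / psK1 P * sqrt (pr1 P * pe P * pK02 P / (pr2 P * pK01 P)) > c2 / c1"
    and C6: "(psa P)\<^sup>2 / (psK1 P * psK2 P) > sqrt (pe P * pK01 P * pK02 P / (pr1 P * pr2 P)) * pa0 P"
  shows "unique_ESS P c1 c2 0 0"
proof -
  have KEY: "c2 * pa0 P * pK01 P * (psK1 P)\<^sup>2 < (psa P)\<^sup>2 * pr1 P * c1"
    by (rule key_ineq[OF pos(1-10) c C5 C6])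
  have hK: "ph P * pa0 P * pK01 P < 1" using C2 pos by (simp add: field_simps)
  have E12: "c1 * (pr1 P * (1 - c1 / pK01 P) - pa0 P * c2 / (1 + ph P * pa0 P * c1)) = 0"
      "c2 * (pe P * pa0 P * c1 / (1 + ph P * pa0 P * c1) - pd P + pr2 P * (1 - c2 / pK02 P)) = 0"
    using eq by (simp_all add: equil_iff K1_0 K2_0 a_00)
  have G1c: "G1 P 0 0 0 c1 c2 = 0" using E12(1) c by (simp add: G1_def K1_0 a_00)
  have G2c: "G2 P 0 0 0 c1 c2 = 0" using E12(2) c by (simp add: G2_def K2_0 a_00)
  define D where "D = 1 + ph P * pa0 P * c1"
  have D1: "D \<ge> 1" using pos c by (simp add: D_def)
  have Dp: "D > 0" using D1 by simp
  have c2eq: "pa0 P * c2 = pr1 P * (1 - c1 / pK01 P) * D"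
    unfolding D_def by (rule G1_zero_eq[OF pos(1) pos(5) pos(9) _ G1c]) (use c in simp)
  define al where "al = c1 * (pr1 P / pK01 P - pa0 P * c2 * ph P * pa0 P / D\<^sup>2)"
  define be where "be = c1 * pa0 P / D"
  define ga where "ga = c2 * pe P * pa0 P / D\<^sup>2"
  define de where "de = c2 * pr2 P / pK02 P"
  define k1 where "k1 = pr1 P * c1 / ((psK1 P)\<^sup>2 * pK01 P)"
  define m where "m = c2 * pa0 P / ((psa P)\<^sup>2 * D\<^sup>2)"
  define k2 where "k2 = pr2 P * c2 / ((psK2 P)\<^sup>2 * pK02 P)"
  define n where "n = pe P * c1 * pa0 P / ((psa P)\<^sup>2 * D\<^sup>2)"
  have alp: "al > 0"
  proof -
    have "pa0 P * c2 * ph P * pa0 P / D\<^sup>2 = ph P * pa0 P * (pa0 P * c2) / D\<^sup>2"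
      by (simp add: algebra_simps)
    also have "\<dots> = ph P * pa0 P * (pr1 P * (1 - c1 / pK01 P) * D) / D\<^sup>2"
      by (simp only: c2eq)
    also have "\<dots> = ph P * pa0 P * pr1 P * (1 - c1 / pK01 P) / D"
      using Dp by (simp add: power2_eq_square)
    also have "\<dots> < pr1 P / pK01 P"
    proof -
      have "ph P * pa0 P * (pK01 P - c1) < D"
      proof -
        have nn: "0 \<le> ph P * pa0 P * c1" using pos c by simp
        have "ph P * pa0 P * (pK01 P - c1) = ph P * pa0 P * pK01 P - ph P * pa0 P * c1"
          by (simp add: algebra_simps)
        then show ?thesis using hK nn unfolding D_def by linarith
      qed
      then have "ph P * pa0 P * (pK01 P - c1) * pr1 P < D * pr1 P"
        using pos by simp
      moreover have "pK01 P * D > 0" using Dp pos by simp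
      ultimately have "ph P * pa0 P * (pK01 P - c1) * pr1 P / (pK01 P * D) < D * pr1 P / (pK01 P * D)"
        by (rule divide_strict_right_mono)
      moreover have "ph P * pa0 P * pr1 P * (1 - c1 / pK01 P) / D = ph P * pa0 P * (pK01 P - c1) * pr1 P / (pK01 P * D)"
        using pos Dp by (simp add: field_simps)
      moreover have "pr1 P / pK01 P = D * pr1 P / (pK01 P * D)" using Dp pos by simp
      ultimately show ?thesis by simp
    qed
    finally show ?thesis using c by (simp add: al_def)
  qed
  have bep: "be > 0" "ga > 0" "de > 0" "k2 > 0" "n > 0" "m > 0"
    using pos c Dp by (simp_all add: be_def ga_def de_def k2_def n_def m_def)
  have mk: "m < k1"
  proof -
    have "m \<le> c2 * pa0 P / (psa P)\<^sup>2"
      unfolding m_def using D1 pos c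
      by (simp add: divide_left_mono mult_pos_pos power_mono[of 1 D 2, simplified] frac_le)
    also have "\<dots> < k1" using KEY pos by (simp add: k1_def field_simps)
    finally show ?thesis .
  qed
  have Jz: "Jat P c1 c2 z = (- al * fst z - be * fst (snd z), ga * fst z - de * fst (snd z),
             (ps1 P)\<^sup>2 * (- k1 * fst (snd (snd z)) + m * (fst (snd (snd z)) - snd (snd (snd z)))),
             (ps2 P)\<^sup>2 * (- k2 * snd (snd (snd z)) + n * (fst (snd (snd z)) - snd (snd (snd z)))))" for z
    using Dp pos
    apply (simp only: Jat_def Let_def)
    apply (simp add: D_def[symmetric] G1c G2c)
    apply (simp add: al_def be_def ga_def de_def k1_def m_def k2_def n_def field_simps)
    done
  have der: "(field P has_derivative Jat P c1 c2) (at (c1, c2, 0, 0))"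
    by (rule field_deriv) (use pos c in auto)
  define q :: st where "q = (ga, be, (ps2 P)\<^sup>2 * n, (ps1 P)\<^sup>2 * m)"
  define mu where "mu = min (min (ga * al) (be * de)) (min ((ps1 P)\<^sup>2 * (ps2 P)\<^sup>2 * n * (k1 - m)) ((ps1 P)\<^sup>2 * (ps2 P)\<^sup>2 * m * (k2 + n)))"
  have mup: "mu > 0" using pos bep alp mk by (simp add: mu_def)
  have qp: "fst q > 0" "fst (snd q) > 0" "fst (snd (snd q)) > 0" "snd (snd (snd q)) > 0"
    using pos bep by (simp_all add: q_def)
  have neg: "Bw q z (Jat P c1 c2 z) \<le> - mu * (norm z)\<^sup>2" for z
  proof (rule sum4_bound[of mu "ga * al" "be * de" "(ps1 P)\<^sup>2 * (ps2 P)\<^sup>2 * n * (k1 - m)" "(ps1 P)\<^sup>2 * (ps2 P)\<^sup>2 * m * (k2 + n)"])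
    show "mu \<le> ga * al" "mu \<le> be * de" "mu \<le> (ps1 P)\<^sup>2 * (ps2 P)\<^sup>2 * n * (k1 - m)" "mu \<le> (ps1 P)\<^sup>2 * (ps2 P)\<^sup>2 * m * (k2 + n)"
      by (simp_all add: mu_def)
    show "Bw q z (Jat P c1 c2 z) \<le> - (ga * al) * (fst z)\<^sup>2 - (be * de) * (fst (snd z))\<^sup>2
        - ((ps1 P)\<^sup>2 * (ps2 P)\<^sup>2 * n * (k1 - m)) * (fst (snd (snd z)))\<^sup>2 - ((ps1 P)\<^sup>2 * (ps2 P)\<^sup>2 * m * (k2 + n)) * (snd (snd (snd z)))\<^sup>2"
      by (simp add: Bw_def Jz q_def power2_eq_square algebra_simps)
  qed
  have las: "loc_asym_stable P (c1, c2, 0, 0)"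
    by (rule lyap_LAS[OF _ der qp mup neg]) (use eq in \<open>simp add: is_equilibrium_def\<close>)
  have G1max: "G1 P v 0 0 c1 c2 \<le> G1 P 0 0 0 c1 c2" for v
    by (rule G1max2) (use pos c KEY in auto)
  have G2max: "G2 P v 0 0 c1 c2 \<le> G2 P 0 0 0 c1 c2" for v
  proof -
    have "pe P * acoef P 0 v * c1 / (1 + ph P * acoef P 0 v * c1) \<le> pe P * pa0 P * c1 / (1 + ph P * pa0 P * c1)"
      by (rule gmono2) (use pos c a_le[of P 0 v] a_pos[of P 0 v] in auto)
    moreover have "c2 / pK02 P \<le> c2 / K2 P v"
      using pos c K2_le[of P v] K2_pos[of P v] by (simp add: frac_le)
    then have "pr2 P * (1 - c2 / K2 P v) \<le> pr2 P * (1 - c2 / pK02 P)"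
      using pos by (simp add: mult_left_mono)
    ultimately show ?thesis by (simp add: G2_def a_00 K2_0)
  qed
  have ess: "ESS P c1 c2 0 0"
    unfolding ESS_def using eq las c G1max G2max G1c G2c by simp
  have c1K: "c1 < pK01 P"
  proof -
    have "pr1 P * (1 - c1 / pK01 P) * D > 0" using c2eq pos c by (metis mult_pos_pos)
    then have "1 - c1 / pK01 P > 0" using pos Dp by (simp add: zero_less_mult_iff)
    then show ?thesis using pos by (simp add: field_simps)
  qed
  have uniq: "(y1, y2, w1, w2) = (c1, c2, 0, 0)" if e: "ESS P y1 y2 w1 w2" for y1 y2 w1 w2
  proof -
    from ess_cases[OF pos e] show ?thesis
    proof
      assume b: "y1 = pK01 P \<and> y2 = 0 \<and> w1 = 0 \<and> w2 = 0"
      then have "G2 P 0 0 0 (pK01 P) 0 \<le> 0" using e unfolding ESS_def by auto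
      moreover have "G2 P 0 0 0 (pK01 P) 0 > 0"
      proof -
        have "pe P * pa0 P * c1 / (1 + ph P * pa0 P * c1) \<le> pe P * pa0 P * pK01 P / (1 + ph P * pa0 P * pK01 P)"
          by (rule hmono) (use pos c c1K in auto)
        moreover have "pr2 P * c2 / pK02 P > 0" using pos c by simp
        ultimately show ?thesis using G2c unfolding G2_0_eq by simp
      qed
      ultimately show ?thesis by simp
    next
      assume d: "y1 > 0 \<and> y2 > 0 \<and> w1 = 0 \<and> w2 = 0"
      then have g1: "G1 P 0 0 0 y1 y2 = 0" and g2: "G2 P 0 0 0 y1 y2 = 0"
        using e unfolding ESS_def by auto
      have "y1 = c1"
      proof (rule ccontr)
        assume "y1 \<noteq> c1"
        then have "y1 < c1 \<or> c1 < y1" by auto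
        then show False
        proof
          assume "y1 < c1"
          show False by (rule int_no_less[OF pos(1) pos(2) pos(5) pos(8) pos(9) pos(10) pos(7) hK _ \<open>y1 < c1\<close> g1 g2 G1c G2c]) (use d in simp)
        next
          assume "c1 < y1"
          show False by (rule int_no_less[OF pos(1) pos(2) pos(5) pos(8) pos(9) pos(10) pos(7) hK _ \<open>c1 < y1\<close> G1c G2c g1 g2]) (use c in simp)
        qed
      qed
      moreover have "pa0 P * y2 = pa0 P * c2"
        using G1_zero_eq[OF pos(1) pos(5) pos(9) _ g1] G1_zero_eq[OF pos(1) pos(5) pos(9) _ G1c] d c \<open>y1 = c1\<close> by simp
      then have "y2 = c2" using pos by simp
      ultimately show ?thesis using d by simp
    qed
  qed
  show ?thesis unfolding unique_ESS_def using ess uniq by blast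
qed


theorem theorem7:
  fixes P :: params
  assumes pos: "pK01 P > 0" "pK02 P > 0" "psK1 P > 0" "psK2 P > 0" "pa0 P > 0" "psa P > 0"
      "pr1 P > 0" "pr2 P > 0" "ph P > 0" "pe P > 0" "ps1 P > 0" "ps2 P > 0"
    and d_nonneg: "pd P \<ge> 0"
  shows "(pr2 P + pe P * pa0 P * pK01 P / (1 + pa0 P * ph P * pK01 P) < pd P
            \<longrightarrow> unique_ESS P (pK01 P) 0 0 0)
       \<and> (\<forall>x1s x2s.
            psK2 P > psK1 P \<and> x1s > 0 \<and> x2s > 0 \<and> is_equilibrium P (x1s, x2s, 0, 0) \<and>
            pK02 P * pa0 P < pr1 P / (1 - pd P / pr2 P) \<and>
            pK01 P * pa0 P < 1 / ph P \<and>
            min (2 * pr2 P / pK02 P) (pr1 P / ((psK1 P)\<^sup>2 * pK01 P)) > pa0 P \<and>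
            pr1 P * pr2 P / (pK01 P * pK02 P) + pe P * (pa0 P)\<^sup>2 / (1 + pa0 P * ph P * pK01 P) ^ 3
              > (pa0 P)\<^sup>2 * ph P * pK02 P * (pr2 P + pe P / ph P) \<and>
            psK2 P / psK1 P * sqrt (pr1 P * pe P * pK02 P / (pr2 P * pK01 P)) > x2s / x1s \<and>
            (psa P)\<^sup>2 / (psK1 P * psK2 P) > sqrt (pe P * pK01 P * pK02 P / (pr1 P * pr2 P)) * pa0 P
          \<longrightarrow> unique_ESS P x1s x2s 0 0)"
  proof (intro conjI impI allI)
  show "unique_ESS P (pK01 P) 0 0 0"
    if "pr2 P + pe P * pa0 P * pK01 P / (1 + pa0 P * ph P * pK01 P) < pd P"
    by (rule part1[OF pos d_nonneg that])
  fix x1s x2s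
  assume H: "psK2 P > psK1 P \<and> x1s > 0 \<and> x2s > 0 \<and> is_equilibrium P (x1s, x2s, 0, 0) \<and>
            pK02 P * pa0 P < pr1 P / (1 - pd P / pr2 P) \<and>
            pK01 P * pa0 P < 1 / ph P \<and>
            min (2 * pr2 P / pK02 P) (pr1 P / ((psK1 P)\<^sup>2 * pK01 P)) > pa0 P \<and>
            pr1 P * pr2 P / (pK01 P * pK02 P) + pe P * (pa0 P)\<^sup>2 / (1 + pa0 P * ph P * pK01 P) ^ 3
              > (pa0 P)\<^sup>2 * ph P * pK02 P * (pr2 P + pe P / ph P) \<and>
            psK2 P / psK1 P * sqrt (pr1 P * pe P * pK02 P / (pr2 P * pK01 P)) > x2s / x1s \<and>
            (psa P)\<^sup>2 / (psK1 P * psK2 P) > sqrt (pe P * pK01 P * pK02 P / (pr1 P * pr2 P)) * pa0 P"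
  show "unique_ESS P x1s x2s 0 0"
    by (rule part2[OF pos d_nonneg]) (use H in auto)
qed

end
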